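(* Let $c\ge 3$ be an integer with distinct prime factors $q_1,\dots,q_\omega$. Then $$G_c \;=\; R(c)^{\varphi(c)/2}\prod_{\substack{2\le p<c,\ p \text{ prime}\\ (p,c)=1}} p^{E_c(p)}.$$
   Context: For a positive integer $n$, $R(n)$ denotes its radical, the product of the distinct primes dividing $n$ (with $R(1)=1$). $\varphi$ is Euler's totient function. For an integer $c\ge 3$, consider all pairs of positive integers $(a,b)$ with $a+b=c$, $a<b$, $\gcd(a,b)=1$; there are $\varphi(c)/2$ of them, and $G_c$ is the product of $R(abc)$ over all these pairs. For a positive integer $n$ with distinct prime factors $q_1,\dots,q_\omega$ ($\omega=0$ if $n=1$) and a real number $x\neq 0$, define $$E_n(x)=\sum_{S\subseteq\{1,\dots,\omega\}}(-1)^{|S|}\left\lfloor \frac{n}{x\prod_{i\in S}q_i}\right\rfloor,$$ i.e. $\lfloor n/x\rfloor-\sum_i\lfloor n/(xq_i)\rfloor+\sum_{i<j}\lfloor n/(xq_iq_j)\rfloor-\cdots+(-1)^\omega\lfloor n/(xq_1\cdots q_\omega)\rfloor$. *)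

theory Defs
  imports "HOL-Number_Theory.Number_Theory"
begin

definition rad :: "nat \<Rightarrow> nat" where
  "rad n = (\<Prod>p\<in>prime_factors n. p)"

definition G :: "nat \<Rightarrow> nat" where
  "G c = (\<Prod>(a,b)\<in>{(a,b). 0 < a \<and> 0 < b \<and> a + b = c \<and> a < b \<and> coprime a b}. rad (a * b * c))"

definition E :: "nat \<Rightarrow> real \<Rightarrow> int" where
  "E n x = (\<Sum>S\<in>Pow (prime_factors n).
              (-1) ^ card S * \<lfloor>real n / (x * real (\<Prod>q\<in>S. q))\<rfloor>)"

end

theory Submission
  imports Defs
begin

lemma coprime_pf: "(c::nat) > 0 \<Longrightarrow> coprime k c \<longleftrightarrow> (\<forall>q\<in>prime_factors c. \<not> q dvd k)"
proof
  assume "c > 0" "coprime k c"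
  show "\<forall>q\<in>prime_factors c. \<not> q dvd k"
  proof (intro ballI notI)
    fix q assume q: "q \<in> prime_factors c" "q dvd k"
    hence "prime q" "q dvd c" by auto
    hence "is_unit q" using q(2) \<open>coprime k c\<close> coprime_common_divisor by blast
    thus False using \<open>prime q\<close> by simp
  qed
next
  assume c: "c > 0" and h: "\<forall>q\<in>prime_factors c. \<not> q dvd k"
  show "coprime k c"
  proof (rule ccontr)
    assume "\<not> coprime k c"
    hence "gcd k c \<noteq> 1" using coprime_iff_gcd_eq_1 by blast
    then obtain q where q: "prime q" "q dvd gcd k c" using prime_factor_nat by blast
    hence "q dvd k" "q dvd c" by auto
    hence "q \<in> prime_factors c" using q c by (simp add: in_prime_factors_iff)
    thus False using h \<open>q dvd k\<close> by blast
  qed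
qed

lemma incl_excl:
  fixes Q :: "nat set"
  assumes "finite Q" "\<forall>q\<in>Q. prime q"
  shows "int (card {k\<in>{1..N}. \<forall>q\<in>Q. \<not> q dvd k}) = (\<Sum>S\<in>Pow Q. (-1)^card S * int (N div \<Prod>S))"
using assms proof (induction Q arbitrary: N rule: finite_induct)
  case empty
  have "{k::nat. Suc 0 \<le> k \<and> k \<le> N} = {1..N}" by auto
  then show ?case by simp
next
  case (insert q Q)
  have qp: "prime q" and Qp: "\<forall>p\<in>Q. prime p" using insert.prems by auto
  define A where "A = {k\<in>{1..N}. \<forall>p\<in>Q. \<not> p dvd k}"
  define A' where "A' = {k\<in>{1..N}. \<forall>p\<in>insert q Q. \<not> p dvd k}"
  define B where "B = {k\<in>{1..N}. (\<forall>p\<in>Q. \<not> p dvd k) \<and> q dvd k}"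
  define C where "C = {k\<in>{1..N div q}. \<forall>p\<in>Q. \<not> p dvd k}"
  have "A = A' \<union> B" "A' \<inter> B = {}" unfolding A_def A'_def B_def by auto
  hence cA: "card A = card A' + card B" unfolding A_def A'_def B_def
    by (simp add: card_Un_disjoint)
  have dq: "p dvd q * k \<longleftrightarrow> p dvd k" if "p \<in> Q" for p k
  proof -
    have pp: "prime p" using Qp that by auto
    have "p \<noteq> q" using that insert.hyps by auto
    hence "\<not> p dvd q" using pp qp primes_dvd_imp_eq by blast
    thus ?thesis using pp prime_dvd_mult_iff by blast
  qed
  have q0: "q > 0" using qp prime_gt_0_nat by blast
  have "B = (\<lambda>k. q * k) ` C"
  proof
    show "B \<subseteq> (\<lambda>k. q * k) ` C"
    proof
      fix m assume m: "m \<in> B"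
      then obtain k where k: "m = q * k" unfolding B_def by auto
      have "k \<in> C" using m k dq q0 unfolding B_def C_def
        by (auto simp: less_eq_div_iff_mult_less_eq mult.commute)
      thus "m \<in> (\<lambda>k. q * k) ` C" using k by auto
    qed
  next
    show "(\<lambda>k. q * k) ` C \<subseteq> B"
      using dq q0 unfolding B_def C_def
      by (auto simp: less_eq_div_iff_mult_less_eq mult.commute)
  qed
  moreover have "inj_on (\<lambda>k. q * k) C" using q0 by (auto simp: inj_on_def)
  ultimately have cB: "card B = card C" by (simp add: card_image)
  have IH1: "int (card A) = (\<Sum>S\<in>Pow Q. (-1)^card S * int (N div \<Prod>S))"
    unfolding A_def using insert.IH Qp by blast
  have IH2: "int (card C) = (\<Sum>S\<in>Pow Q. (-1)^card S * int ((N div q) div \<Prod>S))"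
    unfolding C_def using insert.IH Qp by blast
  have fin: "finite (Pow Q)" using insert.hyps by simp
  have disj: "Pow Q \<inter> insert q ` Pow Q = {}" using insert.hyps by auto
  have inj: "inj_on (insert q) (Pow Q)" using insert.hyps
    by (auto simp: inj_on_def)
  have "(\<Sum>S\<in>Pow (insert q Q). (-1)^card S * int (N div \<Prod>S))
      = (\<Sum>S\<in>Pow Q. (-1)^card S * int (N div \<Prod>S)) + (\<Sum>S\<in>insert q ` Pow Q. (-1)^card S * int (N div \<Prod>S))"
    unfolding Pow_insert using fin disj by (simp add: sum.union_disjoint)
  also have "(\<Sum>S\<in>insert q ` Pow Q. (-1)^card S * int (N div \<Prod>S))
     = (\<Sum>S\<in>Pow Q. (-1)^card (insert q S) * int (N div \<Prod>(insert q S)))"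
    using inj by (simp add: sum.reindex)
  also have "\<dots> = (\<Sum>S\<in>Pow Q. - ((-1)^card S * int ((N div q) div \<Prod>S)))"
  proof (rule sum.cong)
    fix S assume S: "S \<in> Pow Q"
    hence fS: "finite S" and qS: "q \<notin> S" using insert.hyps finite_subset by auto
    show "(-1)^card (insert q S) * int (N div \<Prod>(insert q S)) = - ((-1)^card S * int ((N div q) div \<Prod>S))"
      using fS qS by (simp add: div_mult2_eq)
  qed simp
  finally show ?case using IH1 IH2 cA cB unfolding A'_def by (simp add: sum_negf)
qed


lemma div_pred_eq:
  fixes c m :: nat
  assumes "c > 0" "\<not> m dvd c"
  shows "c div m = (c - 1) div m"
proof (cases "m = 0")
  case True then show ?thesis by simp
next
  case False
  have r: "c mod m > 0" using assms(2) by (simp add: dvd_eq_mod_eq_0)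
  have e: "c = m * (c div m) + c mod m" by simp
  have lt: "c mod m < m" using False by simp
  show ?thesis
  proof (rule sym, rule div_nat_eqI)
    show "m * (c div m) \<le> c - 1" using e r by linarith
    have "m * Suc (c div m) = m * (c div m) + m" by simp
    then show "c - 1 < m * Suc (c div m)" using e lt by linarith
  qed
qed

lemma rad_mult:
  fixes x y :: nat
  assumes "x \<noteq> 0" "y \<noteq> 0" "coprime x y"
  shows "rad (x * y) = rad x * rad y"
proof -
  have "prime_factors x \<inter> prime_factors y = {}"
  proof (rule ccontr)
    assume "prime_factors x \<inter> prime_factors y \<noteq> {}"
    then obtain q where q: "q \<in> prime_factors x" "q \<in> prime_factors y" by blast
    hence "prime q" "q dvd x" "q dvd y" by auto
    hence "is_unit q" using assms(3) coprime_common_divisor by blast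
    thus False using \<open>prime q\<close> by simp
  qed
  thus ?thesis unfolding rad_def using assms
    by (simp add: prime_factors_product prod.union_disjoint)
qed

lemma rad_pos: "(x::nat) \<noteq> 0 \<Longrightarrow> rad x > 0"
  unfolding rad_def by (auto intro!: prod_pos simp: in_prime_factors_iff prime_gt_0_nat)

lemma rad_as_prod:
  fixes a :: nat and P :: "nat set"
  assumes "finite P" "\<forall>p\<in>P. prime p" "a \<noteq> 0" "prime_factors a \<subseteq> P"
  shows "rad a = (\<Prod>p\<in>P. p ^ (if p dvd a then 1 else 0))"
proof -
  have "(\<Prod>p\<in>P. p ^ (if p dvd a then 1 else 0)) = (\<Prod>p\<in>P. if p \<in> prime_factors a then p else 1)"
  proof (rule prod.cong)
    fix p assume "p \<in> P"
    hence "prime p" using assms(2) by blast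
    hence "p dvd a \<longleftrightarrow> p \<in> prime_factors a" using assms(3) by (auto simp: in_prime_factors_iff)
    thus "p ^ (if p dvd a then 1 else 0) = (if p \<in> prime_factors a then p else 1)" by simp
  qed simp
  also have "\<dots> = (\<Prod>p\<in>P \<inter> prime_factors a. p)"
    using assms(1) by (simp add: prod.inter_restrict)
  also have "P \<inter> prime_factors a = prime_factors a" using assms(4) by blast
  finally show ?thesis unfolding rad_def by simp
qed


lemma E_val:
  fixes c p :: nat
  assumes c: "c > 0" and p: "prime p" "coprime p c"
  shows "E c (real p) = int (card {a\<in>{1..c-1}. coprime a c \<and> p dvd a})"
proof -
  define N where "N = (c - 1) div p"
  have p0: "p > 0" using p prime_gt_0_nat by blast
  have "E c (real p) = (\<Sum>S\<in>Pow (prime_factors c). (-1) ^ card S * int (N div \<Prod>S))"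
    unfolding E_def
  proof (rule sum.cong)
    fix S assume S: "S \<in> Pow (prime_factors c)"
    have "\<not> (p * \<Prod>S) dvd c"
    proof
      assume "(p * \<Prod>S) dvd c"
      hence pc: "p dvd c" using dvd_mult_left by blast
      have "is_unit p" by (rule coprime_common_divisor[OF p(2) dvd_refl pc])
      thus False using p(1) by simp
    qed
    hence "c div (p * \<Prod>S) = (c - 1) div (p * \<Prod>S)" using div_pred_eq c by blast
    also have "\<dots> = N div \<Prod>S" unfolding N_def by (simp add: div_mult2_eq)
    finally have eq: "c div (p * \<Prod>S) = N div \<Prod>S" .
    have "\<lfloor>real c / (real p * real (\<Prod>q\<in>S. q))\<rfloor> = \<lfloor>real c / real (p * \<Prod>S)\<rfloor>" by simp
    also have "\<dots> = int (c div (p * \<Prod>S))" by (rule floor_divide_of_nat_eq)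
    finally show "(-1) ^ card S * \<lfloor>real c / (real p * real (\<Prod>q\<in>S. q))\<rfloor> = (-1) ^ card S * int (N div \<Prod>S)"
      using eq by simp
  qed simp
  also have "\<dots> = int (card {k\<in>{1..N}. \<forall>q\<in>prime_factors c. \<not> q dvd k})"
    by (rule incl_excl[symmetric]) auto
  also have "card {k\<in>{1..N}. \<forall>q\<in>prime_factors c. \<not> q dvd k} = card {a\<in>{1..c-1}. coprime a c \<and> p dvd a}"
  proof -
    have eqset: "{k\<in>{1..N}. \<forall>q\<in>prime_factors c. \<not> q dvd k} = {k\<in>{1..N}. coprime k c}"
      using coprime_pf[OF c] by blast
    have "{a\<in>{1..c-1}. coprime a c \<and> p dvd a} = (\<lambda>k. p * k) ` {k\<in>{1..N}. coprime k c}"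
    proof
      show "{a\<in>{1..c-1}. coprime a c \<and> p dvd a} \<subseteq> (\<lambda>k. p * k) ` {k\<in>{1..N}. coprime k c}"
      proof
        fix a assume a: "a \<in> {a\<in>{1..c-1}. coprime a c \<and> p dvd a}"
        then obtain k where k: "a = p * k" by auto
        have "k \<ge> 1" using a k by (cases k) auto
        moreover have "k \<le> N" unfolding N_def using a k p0
          by (auto simp: less_eq_div_iff_mult_less_eq mult.commute)
        moreover have "coprime k c" using a k by simp
        ultimately show "a \<in> (\<lambda>k. p * k) ` {k\<in>{1..N}. coprime k c}" using k by auto
      qed
    next
      show "(\<lambda>k. p * k) ` {k\<in>{1..N}. coprime k c} \<subseteq> {a\<in>{1..c-1}. coprime a c \<and> p dvd a}"
      proof
        fix a assume "a \<in> (\<lambda>k. p * k) ` {k\<in>{1..N}. coprime k c}"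
        then obtain k where k: "a = p * k" "k \<ge> 1" "k \<le> N" "coprime k c" by auto
        have "p * k \<le> c - 1" using k(3) p0 unfolding N_def
          by (auto simp: less_eq_div_iff_mult_less_eq mult.commute)
        moreover have "p * k \<ge> 1" using k(2) p0 by simp
        moreover have "coprime (p * k) c" using k(4) p(2) by simp
        ultimately show "a \<in> {a\<in>{1..c-1}. coprime a c \<and> p dvd a}" using k(1) by auto
      qed
    qed
    moreover have "inj_on (\<lambda>k. p * k) {k\<in>{1..N}. coprime k c}" using p0 by (auto simp: inj_on_def)
    ultimately show ?thesis using eqset by (simp add: card_image)
  qed
  finally show ?thesis .
qed

lemma prod_rad:
  fixes c :: nat
  assumes c: "c > 0"
  defines "A \<equiv> {a\<in>{1..c-1}. coprime a c}"
  defines "P \<equiv> {p. prime p \<and> 2 \<le> p \<and> p < c \<and> coprime p c}"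
  shows "(\<Prod>a\<in>A. rad a) = (\<Prod>p\<in>P. p ^ card {a\<in>A. p dvd a})"
proof -
  have fP: "finite P" unfolding P_def by (rule finite_subset[of _ "{..<c}"]) auto
  have fA: "finite A" unfolding A_def by simp
  have "(\<Prod>a\<in>A. rad a) = (\<Prod>a\<in>A. \<Prod>p\<in>P. p ^ (if p dvd a then 1 else 0))"
  proof (rule prod.cong)
    fix a assume a: "a \<in> A"
    have "prime_factors a \<subseteq> P"
    proof
      fix q assume q: "q \<in> prime_factors a"
      hence qp: "prime q" "q dvd a" by auto
      have "a > 0" "a < c" using a c unfolding A_def by auto
      hence "q < c" using qp(2) dvd_imp_le[of q a] by linarith
      moreover have "coprime q c"
      proof -
        obtain k where k: "a = q * k" using qp(2) by blast
        have "coprime a c" using a unfolding A_def by blast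
        thus ?thesis using k by simp
      qed
      moreover have "2 \<le> q" using qp prime_ge_2_nat by blast
      ultimately show "q \<in> P" unfolding P_def using qp by blast
    qed
    moreover have "a \<noteq> 0" using a unfolding A_def by auto
    ultimately show "rad a = (\<Prod>p\<in>P. p ^ (if p dvd a then 1 else 0))"
      using rad_as_prod[OF fP] unfolding P_def by blast
  qed simp
  also have "\<dots> = (\<Prod>p\<in>P. \<Prod>a\<in>A. p ^ (if p dvd a then 1 else 0))" by (rule prod.swap)
  also have "\<dots> = (\<Prod>p\<in>P. p ^ card {a\<in>A. p dvd a})"
  proof (rule prod.cong)
    fix p assume "p \<in> P"
    have "(\<Prod>a\<in>A. p ^ (if p dvd a then 1 else 0)) = p ^ (\<Sum>a\<in>A. (if p dvd a then 1 else 0))"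
      by (simp add: power_sum)
    also have "(\<Sum>a\<in>A. (if p dvd a then 1 else 0::nat)) = card {a\<in>A. p dvd a}"
      using fA by (simp add: sum.If_cases Int_def)
    finally show "(\<Prod>a\<in>A. p ^ (if p dvd a then 1 else 0)) = p ^ card {a\<in>A. p dvd a}" .
  qed simp
  finally show ?thesis .
qed


theorem theorem1:
  fixes c :: nat
  assumes "c \<ge> 3"
  shows "real (G c) =
    real (rad c) ^ (totient c div 2) *
    (\<Prod>p\<in>{p. prime p \<and> 2 \<le> p \<and> p < c \<and> coprime p c}. real p powi E c (real p))"
proof -
  have c0: "c > 0" using assms by simp
  define A where "A = {a\<in>{1..c-1}. coprime a c}"
  define P where "P = {p. prime p \<and> 2 \<le> p \<and> p < c \<and> coprime p c}"
  define L where "L = {a\<in>A. 2 * a < c}"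
  define H where "H = {a\<in>A. c < 2 * a}"
  define Pairs where "Pairs = {(a,b). 0 < a \<and> 0 < b \<and> a + b = c \<and> a < b \<and> coprime a b}"
  have fA: "finite A" unfolding A_def by simp
  have gcd1: "gcd a (c - a) = gcd a c" if "a \<le> c" for a
    using gcd_add2[of a "c - a"] that by simp
  have gcd2: "gcd (c - a) c = gcd a c" if "a \<le> c" for a
    using gcd_diff2_nat[OF that] .
  have cop1: "coprime a (c - a) = coprime a c" if "a \<le> c" for a
    by (simp only: coprime_iff_gcd_eq_1 gcd1[OF that])
  have cop2: "coprime (c - a) c = coprime a c" if "a \<le> c" for a
    by (simp only: coprime_iff_gcd_eq_1 gcd2[OF that])
  have AHL: "A = L \<union> H" "L \<inter> H = {}"
  proof -
    have "2 * a \<noteq> c" if "a \<in> A" for a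
    proof
      assume e: "2 * a = c"
      have "coprime a c" using that unfolding A_def by blast
      hence "coprime a (2 * a)" using e by simp
      hence "a = 1" by simp
      thus False using e assms by simp
    qed
    thus "A = L \<union> H" unfolding L_def H_def by fastforce
    show "L \<inter> H = {}" unfolding L_def H_def by auto
  qed
  have HL: "H = (\<lambda>a. c - a) ` L"
  proof
    show "H \<subseteq> (\<lambda>a. c - a) ` L"
    proof
      fix a assume a: "a \<in> H"
      hence "a < c" "coprime a c" "a \<ge> 1" "c < 2 * a" unfolding H_def A_def by auto
      hence "c - a \<in> L" unfolding L_def A_def using cop2[of a]
        by auto
      moreover have "a = c - (c - a)" using \<open>a < c\<close> by simp
      ultimately show "a \<in> (\<lambda>a. c - a) ` L" by blast
    qed
  next
    show "(\<lambda>a. c - a) ` L \<subseteq> H"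
    proof
      fix b assume "b \<in> (\<lambda>a. c - a) ` L"
      then obtain a where a: "a \<in> L" "b = c - a" by blast
      hence "a < c" "coprime a c" "a \<ge> 1" "2 * a < c" unfolding L_def A_def by auto
      thus "b \<in> H" unfolding H_def A_def using a(2) cop2[of a]
        by auto
    qed
  qed
  have injH: "inj_on (\<lambda>a. c - a) L" unfolding L_def A_def by (auto simp: inj_on_def)
  have fL: "finite L" "finite H" unfolding L_def H_def using fA by auto
  have cardA: "card A = totient c"
  proof -
    have ncc: "\<not> coprime c c" using assms by simp
    have "A = totatives c" unfolding A_def totatives_def using assms
      by (auto simp: le_diff_conv2) (metis le_antisym ncc not_less_eq_eq Suc_pred c0)
    thus ?thesis by (simp add: totient_def)
  qed
  have cardL: "card L = totient c div 2"
  proof -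
    have "card H = card L" using HL injH by (simp add: card_image)
    hence "card A = 2 * card L" using AHL fL by (simp add: card_Un_disjoint)
    thus ?thesis using cardA by simp
  qed
  have PairsL: "Pairs = (\<lambda>a. (a, c - a)) ` L"
  proof
    show "Pairs \<subseteq> (\<lambda>a. (a, c - a)) ` L"
    proof
      fix x assume "x \<in> Pairs"
      then obtain a b where x: "x = (a, b)" "0 < a" "0 < b" "a + b = c" "a < b" "coprime a b"
        unfolding Pairs_def by blast
      have "coprime a c" using x cop1[of a] by auto
      hence "a \<in> L" unfolding L_def A_def using x by auto
      moreover have "b = c - a" using x by simp
      ultimately show "x \<in> (\<lambda>a. (a, c - a)) ` L" using x(1) by blast
    qed
  next
    show "(\<lambda>a. (a, c - a)) ` L \<subseteq> Pairs"
    proof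
      fix x assume "x \<in> (\<lambda>a. (a, c - a)) ` L"
      then obtain a where a: "a \<in> L" "x = (a, c - a)" by blast
      hence "a < c" "coprime a c" "a \<ge> 1" "2 * a < c" unfolding L_def A_def by auto
      thus "x \<in> Pairs" unfolding Pairs_def using a(2) cop1[of a]
        by auto
    qed
  qed
  have injP: "inj_on (\<lambda>a. (a, c - a)) L" by (auto simp: inj_on_def)
  have "G c = (\<Prod>(a,b)\<in>Pairs. rad (a * b * c))" unfolding G_def Pairs_def by simp
  also have "\<dots> = (\<Prod>a\<in>L. rad (a * (c - a) * c))"
    unfolding PairsL using injP by (simp add: prod.reindex)
  also have "\<dots> = (\<Prod>a\<in>L. rad a * rad (c - a) * rad c)"
  proof (rule prod.cong)
    fix a assume a: "a \<in> L"
    hence "a < c" "coprime a c" "a \<ge> 1" unfolding L_def A_def by auto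
    hence cp1: "coprime a (c - a)" and cp2: "coprime (c - a) c" using cop1[of a] cop2[of a]
      by auto
    hence cp3: "coprime (a * (c - a)) c" using \<open>coprime a c\<close> by simp
    have "rad (a * (c - a) * c) = rad (a * (c - a)) * rad c"
      using rad_mult[OF _ _ cp3] \<open>a < c\<close> \<open>a \<ge> 1\<close> by simp
    also have "rad (a * (c - a)) = rad a * rad (c - a)"
      using rad_mult[OF _ _ cp1] \<open>a < c\<close> \<open>a \<ge> 1\<close> by simp
    finally show "rad (a * (c - a) * c) = rad a * rad (c - a) * rad c" .
  qed simp
  also have "\<dots> = rad c ^ card L * ((\<Prod>a\<in>L. rad a) * (\<Prod>a\<in>L. rad (c - a)))"
    by (simp add: prod.distrib mult.commute)
  also have "(\<Prod>a\<in>L. rad (c - a)) = (\<Prod>a\<in>H. rad a)"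
    unfolding HL using injH by (simp add: prod.reindex)
  also have "(\<Prod>a\<in>L. rad a) * (\<Prod>a\<in>H. rad a) = (\<Prod>a\<in>A. rad a)"
    using AHL fL by (simp add: prod.union_disjoint)
  also have "\<dots> = (\<Prod>p\<in>P. p ^ card {a\<in>A. p dvd a})"
    unfolding A_def P_def by (rule prod_rad[OF c0])
  finally have Gc: "G c = rad c ^ (totient c div 2) * (\<Prod>p\<in>P. p ^ card {a\<in>A. p dvd a})"
    using cardL by simp
  have "(\<Prod>p\<in>P. real p powi E c (real p)) = (\<Prod>p\<in>P. real p ^ card {a\<in>A. p dvd a})"
  proof (rule prod.cong)
    fix p assume "p \<in> P"
    hence "prime p" "coprime p c" unfolding P_def by auto
    hence "E c (real p) = int (card {a\<in>A. p dvd a})"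
      using E_val[OF c0] unfolding A_def by simp
    thus "real p powi E c (real p) = real p ^ card {a\<in>A. p dvd a}" by simp
  qed simp
  thus ?thesis unfolding P_def[symmetric] using Gc by simp
qed

end
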